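(* Let $G$ be a group acting geometrically (i.e.\ properly and cocompactly by isometries) on a CAT(0) space $X$, and let $g\in G$ have infinite order. Then $$\mathcal{F}_g=L(Z_g)=\partial\operatorname{Min}(g).$$
   Context: $\partial X$ is the visual boundary of the (necessarily proper) CAT(0) space $X$ (asymptotic classes of geodesic rays, with the cone topology making $X\cup\partial X$ a compactification), and $g$ acts on it by $g(\xi(\infty))=(g\circ\xi)(\infty)$. $\mathcal{F}_g=\{\alpha\in\partial X\mid g\alpha=\alpha\}$. $Z_g=\{v\in G\mid gv=vg\}$ is the centralizer of $g$. For $A\subset G$, $L(A)=\overline{Ax_0}\cap\partial X$ (closure in $X\cup\partial X$, for any $x_0\in X$). $|g|=\inf_{x\in X}d(x,gx)$ and $\operatorname{Min}(g)=\{x\in X\mid d(x,gx)=|g|\}$; $\partial\operatorname{Min}(g)\subset\partial X$ is the set of boundary points represented by geodesic rays contained in the closed convex set $\operatorname{Min}(g)$. *)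

theory Defs
  imports "HOL-Analysis.Analysis" "HOL-Algebra.Group"
begin

section \<open>CAT(0) spaces (the whole type 'a is the space X)\<close>

definition geodesic_seg :: "(real \<Rightarrow> 'a::metric_space) \<Rightarrow> 'a \<Rightarrow> 'a \<Rightarrow> bool" where
  "geodesic_seg \<gamma> x y \<longleftrightarrow> \<gamma> 0 = x \<and> \<gamma> (dist x y) = y \<and>
     (\<forall>s\<in>{0..dist x y}. \<forall>t\<in>{0..dist x y}. dist (\<gamma> s) (\<gamma> t) = \<bar>s - t\<bar>)"

text \<open>Pairs (point on a side, its comparison point) for the side \<gamma> of length d,
  whose comparison side in the Euclidean plane (complex numbers) runs from a' to b'.\<close>
definition side_pairs :: "(real \<Rightarrow> 'a::metric_space) \<Rightarrow> real \<Rightarrow> complex \<Rightarrow> complex \<Rightarrow> ('a \<times> complex) set" where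
  "side_pairs \<gamma> d a' b' = {(\<gamma> s, a' + complex_of_real s * sgn (b' - a')) | s. 0 \<le> s \<and> s \<le> d}"

definition CAT0_ineq :: "'a::metric_space itself \<Rightarrow> bool" where
  "CAT0_ineq TYPE('a) \<longleftrightarrow>
    (\<forall>(x::'a) y z \<gamma>1 \<gamma>2 \<gamma>3 (x'::complex) y' z'.
       geodesic_seg \<gamma>1 x y \<and> geodesic_seg \<gamma>2 y z \<and> geodesic_seg \<gamma>3 z x \<and>
       dist x' y' = dist x y \<and> dist y' z' = dist y z \<and> dist z' x' = dist z x \<longrightarrow>
       (let T = side_pairs \<gamma>1 (dist x y) x' y' \<union> side_pairs \<gamma>2 (dist y z) y' z'
                \<union> side_pairs \<gamma>3 (dist z x) z' x'
        in \<forall>(p, p')\<in>T. \<forall>(q, q')\<in>T. dist p q \<le> dist p' q'))"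

definition geodesic_space :: "'a::metric_space itself \<Rightarrow> bool" where
  "geodesic_space TYPE('a) \<longleftrightarrow> (\<forall>x y::'a. \<exists>\<gamma>. geodesic_seg \<gamma> x y)"

definition CAT0 :: "'a::metric_space itself \<Rightarrow> bool" where
  "CAT0 TYPE('a) \<longleftrightarrow> complete (UNIV::'a set) \<and> geodesic_space TYPE('a) \<and> CAT0_ineq TYPE('a)"

definition proper_space :: "'a::metric_space itself \<Rightarrow> bool" where
  "proper_space TYPE('a) \<longleftrightarrow> (\<forall>(x::'a) r. compact (cball x r))"

definition isometric_action :: "('g, 'm) monoid_scheme \<Rightarrow> ('g \<Rightarrow> 'a::metric_space \<Rightarrow> 'a) \<Rightarrow> bool" where
  "isometric_action G \<phi> \<longleftrightarrow>
     (\<forall>g\<in>carrier G. bij (\<phi> g) \<and> (\<forall>x y. dist (\<phi> g x) (\<phi> g y) = dist x y)) \<and>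
     \<phi> \<one>\<^bsub>G\<^esub> = id \<and>
     (\<forall>g\<in>carrier G. \<forall>h\<in>carrier G. \<phi> (g \<otimes>\<^bsub>G\<^esub> h) = \<phi> g \<circ> \<phi> h)"

text \<open>Proper action (Bridson--Haefliger I.8.2).\<close>
definition properly_acting :: "('g, 'm) monoid_scheme \<Rightarrow> ('g \<Rightarrow> 'a::metric_space \<Rightarrow> 'a) \<Rightarrow> bool" where
  "properly_acting G \<phi> \<longleftrightarrow>
     (\<forall>x. \<exists>r>0. finite {g\<in>carrier G. \<phi> g ` ball x r \<inter> ball x r \<noteq> {}})"

definition cocompact_action :: "('g, 'm) monoid_scheme \<Rightarrow> ('g \<Rightarrow> 'a::metric_space \<Rightarrow> 'a) \<Rightarrow> bool" where
  "cocompact_action G \<phi> \<longleftrightarrow> (\<exists>K. compact K \<and> (\<forall>x. \<exists>g\<in>carrier G. x \<in> \<phi> g ` K))"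

definition geometric_action :: "('g, 'm) monoid_scheme \<Rightarrow> ('g \<Rightarrow> 'a::metric_space \<Rightarrow> 'a) \<Rightarrow> bool" where
  "geometric_action G \<phi> \<longleftrightarrow> isometric_action G \<phi> \<and> properly_acting G \<phi> \<and> cocompact_action G \<phi>"

definition geodesic_ray :: "(real \<Rightarrow> 'a::metric_space) \<Rightarrow> bool" where
  "geodesic_ray c \<longleftrightarrow> (\<forall>s\<ge>0. \<forall>t\<ge>0. dist (c s) (c t) = \<bar>s - t\<bar>)"

definition asymptotic :: "(real \<Rightarrow> 'a::metric_space) \<Rightarrow> (real \<Rightarrow> 'a) \<Rightarrow> bool" where
  "asymptotic c c' \<longleftrightarrow> (\<exists>B. \<forall>t\<ge>0. dist (c t) (c' t) \<le> B)"

text \<open>The boundary point c(\<infinity>): the asymptoty class of the ray c.\<close>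
definition ray_class :: "(real \<Rightarrow> 'a::metric_space) \<Rightarrow> (real \<Rightarrow> 'a) set" where
  "ray_class c = {c'. geodesic_ray c' \<and> asymptotic c c'}"

definition visual_boundary :: "'a::metric_space itself \<Rightarrow> (real \<Rightarrow> 'a) set set" where
  "visual_boundary TYPE('a) = {ray_class c | c::real \<Rightarrow> 'a. geodesic_ray c}"

definition bdry_act :: "('a::metric_space \<Rightarrow> 'a) \<Rightarrow> (real \<Rightarrow> 'a) set \<Rightarrow> (real \<Rightarrow> 'a) set" where
  "bdry_act f \<xi> = ray_class (f \<circ> (SOME c. c \<in> \<xi>))"

definition fixed_bdry :: "('g \<Rightarrow> 'a::metric_space \<Rightarrow> 'a) \<Rightarrow> 'g \<Rightarrow> (real \<Rightarrow> 'a) set set" where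
  "fixed_bdry \<phi> g = {\<alpha>\<in>visual_boundary TYPE('a). bdry_act (\<phi> g) \<alpha> = \<alpha>}"

text \<open>The point at distance r from p on the (unique) geodesic segment [p,x].\<close>
definition geod_pt :: "'a::metric_space \<Rightarrow> 'a \<Rightarrow> real \<Rightarrow> 'a" where
  "geod_pt p x r = (SOME \<gamma>. geodesic_seg \<gamma> p x) r"

text \<open>\<xi> lies in the closure of S \<subseteq> X in the cone topology on X \<union> \<partial>X with basepoint p:
  every basic neighbourhood U(c,r,\<epsilon>) = {z. d(p,z) > r, d(\<pi>_r z, c r) < \<epsilon>}
  (c the ray from p representing \<xi>) meets S.\<close>
definition in_cone_closure :: "'a::metric_space \<Rightarrow> 'a set \<Rightarrow> (real \<Rightarrow> 'a) set \<Rightarrow> bool" where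
  "in_cone_closure p S \<xi> \<longleftrightarrow>
     (\<exists>c\<in>\<xi>. c 0 = p \<and>
        (\<forall>r>0. \<forall>\<epsilon>>0. \<exists>x\<in>S. dist p x > r \<and> dist (geod_pt p x r) (c r) < \<epsilon>))"

text \<open>L(A) = closure of A x0 in X \<union> \<partial>X, intersected with \<partial>X.\<close>
definition limit_set :: "'a::metric_space \<Rightarrow> ('g \<Rightarrow> 'a \<Rightarrow> 'a) \<Rightarrow> 'a \<Rightarrow> 'g set \<Rightarrow> (real \<Rightarrow> 'a) set set" where
  "limit_set p \<phi> x0 A = {\<xi>\<in>visual_boundary TYPE('a). in_cone_closure p ((\<lambda>a. \<phi> a x0) ` A) \<xi>}"

definition centralizer :: "('g, 'm) monoid_scheme \<Rightarrow> 'g \<Rightarrow> 'g set" where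
  "centralizer G g = {v\<in>carrier G. g \<otimes>\<^bsub>G\<^esub> v = v \<otimes>\<^bsub>G\<^esub> g}"

definition transl_length :: "('a::metric_space \<Rightarrow> 'a) \<Rightarrow> real" where
  "transl_length f = (INF x. dist x (f x))"

definition Min_set :: "('a::metric_space \<Rightarrow> 'a) \<Rightarrow> 'a set" where
  "Min_set f = {x. dist x (f x) = transl_length f}"

text \<open>\<partial>Min(g): boundary points represented by a geodesic ray contained in Min(g).\<close>
definition bdry_of :: "'a::metric_space set \<Rightarrow> (real \<Rightarrow> 'a) set set" where
  "bdry_of C = {\<xi>\<in>visual_boundary TYPE('a). \<exists>c\<in>\<xi>. \<forall>t\<ge>0. c t \<in> C}"

end

theory Submission
  imports Defs
begin


lemma tri_exists:
  fixes A B C :: real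
  assumes "A \<ge> 0" "B \<ge> 0" "C \<ge> 0" "A \<le> B + C" "B \<le> A + C" "C \<le> A + B"
  shows "\<exists>z::complex. cmod z = C \<and> cmod (z - of_real A) = B"
proof (cases "A = 0")
  case True
  then have "B = C" using assms by linarith
  then show ?thesis using True assms by (intro exI[of _ "of_real C"]) auto
next
  case False
  then have A: "A > 0" using assms by linarith
  define u where "u = (A^2 + C^2 - B^2) / (2*A)"
  have h1: "(A - C)^2 \<le> B^2"
  proof -
    have "\<bar>A - C\<bar> \<le> B" using assms by linarith
    then show ?thesis by (metis abs_le_square_iff abs_of_nonneg assms(2) power2_abs)
  qed
  have h2: "B^2 \<le> (A + C)^2" using assms by (intro power_mono) auto
  have "u^2 \<le> C^2"
  proof -
    have "\<bar>A^2 + C^2 - B^2\<bar> \<le> 2*A*C" using h1 h2 by (simp add: power2_eq_square algebra_simps abs_le_iff)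
    then have "\<bar>u\<bar> \<le> C" using A by (simp add: u_def abs_divide divide_le_eq) (metis mult.commute mult.assoc)
    then show ?thesis by (metis abs_le_square_iff abs_of_nonneg assms(3))
  qed
  define v where "v = sqrt (C^2 - u^2)"
  have v2: "v^2 = C^2 - u^2" using \<open>u^2 \<le> C^2\<close> by (simp add: v_def)
  define z where "z = Complex u v"
  have "cmod z = sqrt (u^2 + v^2)" by (simp add: z_def cmod_def)
  also have "\<dots> = C" using v2 assms by simp
  finally have c1: "cmod z = C" .
  have "cmod (z - of_real A) = sqrt ((u - A)^2 + v^2)" by (simp add: z_def cmod_def)
  also have "(u - A)^2 + v^2 = B^2"
    using v2 A by (simp add: u_def power2_eq_square field_simps)
  also have "sqrt (B^2) = B" using assms by simp
  finally show ?thesis using c1 by blast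
qed

lemma geodesic_seg_rev:
  assumes "geodesic_seg \<gamma> x y"
  shows "geodesic_seg (\<lambda>s. \<gamma> (dist x y - s)) y x"
  using assms unfolding geodesic_seg_def
  by (auto simp: dist_commute)

lemma geodesic_seg_dist:
  assumes "geodesic_seg \<gamma> x y" "0 \<le> s" "s \<le> dist x y"
  shows "dist x (\<gamma> s) = s" "dist (\<gamma> s) y = dist x y - s"
proof -
  have "dist (\<gamma> 0) (\<gamma> s) = \<bar>0 - s\<bar>" "dist (\<gamma> s) (\<gamma> (dist x y)) = \<bar>s - dist x y\<bar>"
    using assms unfolding geodesic_seg_def by (meson atLeastAtMost_iff order_refl zero_le_dist)+
  moreover have "\<gamma> 0 = x" "\<gamma> (dist x y) = y" using assms unfolding geodesic_seg_def by auto
  ultimately show "dist x (\<gamma> s) = s" "dist (\<gamma> s) y = dist x y - s"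
    using assms by auto
qed

lemma sgn_cmod_mult: "of_real (cmod z) * sgn z = (z::complex)"
  by (cases "z = 0") (simp_all add: sgn_div_norm scaleR_conv_of_real)

lemma cat0_compare:
  fixes x y z :: "'a::metric_space"
  assumes "CAT0 TYPE('a)" "geodesic_seg \<sigma>1 x y" "geodesic_seg \<sigma>2 x z"
    "0 \<le> s" "s \<le> dist x y" "0 \<le> u" "u \<le> dist x z"
  shows "\<exists>y' z'::complex. cmod y' = dist x y \<and> cmod z' = dist x z \<and> cmod (y' - z') = dist y z
     \<and> dist (\<sigma>1 s) (\<sigma>2 u) \<le> cmod (of_real s * sgn y' - of_real u * sgn z')"
proof -
  have ineq: "CAT0_ineq TYPE('a)" and gs: "geodesic_space TYPE('a)"
    using assms(1) by (auto simp: CAT0_def)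
  obtain \<gamma>2 where g2: "geodesic_seg \<gamma>2 y z" using gs unfolding geodesic_space_def by blast
  define \<gamma>3 where "\<gamma>3 = (\<lambda>t. \<sigma>2 (dist x z - t))"
  have g3: "geodesic_seg \<gamma>3 z x" using geodesic_seg_rev[OF assms(3)] by (simp add: \<gamma>3_def)
  obtain z' :: complex where z1: "cmod z' = dist x z" and z2: "cmod (z' - of_real (dist x y)) = dist y z"
    using tri_exists[of "dist x y" "dist y z" "dist x z"]
    by (metis dist_commute dist_triangle zero_le_dist)
  define y' :: complex where "y' = of_real (dist x y)"
  have cy: "cmod y' = dist x y" by (simp add: y'_def)
  have d1: "dist (0::complex) y' = dist x y" by (simp add: y'_def)
  have d2: "dist y' z' = dist y z" using z2 by (simp add: y'_def dist_complex_def norm_minus_commute)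
  have d3: "dist z' 0 = dist z x" using z1 by (simp add: dist_commute)
  define T where "T = side_pairs \<sigma>1 (dist x y) 0 y' \<union> side_pairs \<gamma>2 (dist y z) y' z'
                \<union> side_pairs \<gamma>3 (dist z x) z' 0"
  have all: "\<forall>(p, p')\<in>T. \<forall>(q, q')\<in>T. dist p q \<le> dist p' q'"
    using ineq assms(2) g2 g3 d1 d2 d3 unfolding CAT0_ineq_def T_def Let_def by blast
  have P: "(\<sigma>1 s, 0 + of_real s * sgn (y' - 0)) \<in> T"
    unfolding T_def side_pairs_def using assms(4,5) by blast
  have Q: "(\<gamma>3 (dist z x - u), z' + of_real (dist z x - u) * sgn (0 - z')) \<in> T"
    unfolding T_def side_pairs_def using assms(6,7) by (auto simp: dist_commute)
  have e1: "\<gamma>3 (dist z x - u) = \<sigma>2 u" by (simp add: \<gamma>3_def dist_commute)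
  have e2: "z' + of_real (dist z x - u) * sgn (0 - z') = of_real u * sgn z'"
  proof -
    have "z' = of_real (dist z x) * sgn z'" using z1 sgn_cmod_mult[of z'] by (simp add: dist_commute)
    then show ?thesis by (simp add: sgn_minus algebra_simps)
  qed
  have "dist (\<sigma>1 s) (\<sigma>2 u) \<le> dist (of_real s * sgn y') (of_real u * sgn z')"
    using all P Q e1 e2 by fastforce
  then show ?thesis using cy z1 d2 by (auto simp: dist_complex_def norm_minus_commute)
qed



lemma sgn_diff_identity:
  fixes y z :: complex
  assumes "y \<noteq> 0" "z \<noteq> 0"
  shows "(cmod (sgn y - sgn z))^2 * (cmod y * cmod z) = (cmod (y - z))^2 - (cmod y - cmod z)^2"
proof -
  define Y where "Y = cmod y"
  define Z where "Z = cmod z"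
  have Y: "Y > 0" "Z > 0" using assms by (auto simp: Y_def Z_def)
  have sy: "sgn y = (1/Y) *\<^sub>R y" "sgn z = (1/Z) *\<^sub>R z" by (simp_all add: sgn_div_norm Y_def Z_def divide_inverse_commute)
  have n1: "cmod (sgn y) = 1" "cmod (sgn z) = 1" using assms by (simp_all add: norm_sgn)
  have "(1 + 1 - (cmod (sgn y - sgn z))^2)/2 = inner (sgn y) (sgn z)"
    using dot_norm_neg[of "sgn y" "sgn z"] n1 by simp
  also have "\<dots> = inner y z / (Y*Z)" using sy by simp
  also have "inner y z = (Y^2 + Z^2 - (cmod (y - z))^2)/2"
    using dot_norm_neg[of y z] by (simp add: Y_def Z_def)
  finally have "(1 + 1 - (cmod (sgn y - sgn z))^2)/2 = ((Y^2 + Z^2 - (cmod (y - z))^2)/2) / (Y*Z)" .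
  then have "(2 - (cmod (sgn y - sgn z))^2) * (Y*Z) = Y^2 + Z^2 - (cmod (y - z))^2"
    using Y by (simp add: field_simps)
  then show ?thesis unfolding Y_def[symmetric] Z_def[symmetric]
    by (simp add: power2_eq_square algebra_simps)
qed

lemma common_start:
  fixes x y z :: "'a::metric_space"
  assumes "CAT0 TYPE('a)" "geodesic_seg \<sigma>1 x y" "geodesic_seg \<sigma>2 x z" "0 \<le> l" "l \<le> 1"
  shows "dist (\<sigma>1 (l * dist x y)) (\<sigma>2 (l * dist x z)) \<le> l * dist y z"
proof -
  obtain y' z' :: complex where c: "cmod y' = dist x y" "cmod z' = dist x z" "cmod (y' - z') = dist y z"
    and d: "dist (\<sigma>1 (l * dist x y)) (\<sigma>2 (l * dist x z)) \<le>
       cmod (of_real (l * dist x y) * sgn y' - of_real (l * dist x z) * sgn z')"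
    using cat0_compare[OF assms(1-3), of "l * dist x y" "l * dist x z"] assms(4,5)
    by (auto simp: mult_left_le_one_le)
  have "of_real (l * dist x y) * sgn y' - of_real (l * dist x z) * sgn z' = of_real l * (y' - z')"
  proof -
    have "of_real (l * dist x y) * sgn y' = of_real l * (of_real (cmod y') * sgn y')" using c by simp
    also have "\<dots> = of_real l * y'" by (simp only: sgn_cmod_mult)
    finally have 1: "of_real (l * dist x y) * sgn y' = of_real l * y'" .
    have "of_real (l * dist x z) * sgn z' = of_real l * (of_real (cmod z') * sgn z')" using c by simp
    also have "\<dots> = of_real l * z'" by (simp only: sgn_cmod_mult)
    finally have 2: "of_real (l * dist x z) * sgn z' = of_real l * z'" .
    show ?thesis unfolding 1 2 by (simp add: right_diff_distrib)
  qed
  then have "cmod (of_real (l * dist x y) * sgn y' - of_real (l * dist x z) * sgn z') = l * dist y z"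
    using c assms(4) by (simp add: norm_mult)
  then show ?thesis using d by simp
qed

lemma cauchy_est:
  fixes x y z :: "'a::metric_space"
  assumes "CAT0 TYPE('a)" "geodesic_seg \<sigma>1 x y" "geodesic_seg \<sigma>2 x z" "0 \<le> t"
    "t \<le> dist x y" "t \<le> dist x z" "0 < dist x y" "0 < dist x z"
  shows "(dist (\<sigma>1 t) (\<sigma>2 t))^2 * (dist x y * dist x z) \<le> t^2 * ((dist y z)^2 - (dist x y - dist x z)^2)"
proof -
  obtain y' z' :: complex where c: "cmod y' = dist x y" "cmod z' = dist x z" "cmod (y' - z') = dist y z"
    and d: "dist (\<sigma>1 t) (\<sigma>2 t) \<le> cmod (of_real t * sgn y' - of_real t * sgn z')"
    using cat0_compare[OF assms(1-3), of t t] assms by auto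
  have nz: "y' \<noteq> 0" "z' \<noteq> 0" using c assms by auto
  have e: "cmod (of_real t * sgn y' - of_real t * sgn z') = t * cmod (sgn y' - sgn z')"
    using assms(4) by (simp add: norm_mult flip: right_diff_distrib)
  have "(dist (\<sigma>1 t) (\<sigma>2 t))^2 \<le> (t * cmod (sgn y' - sgn z'))^2"
    using d e by (simp add: power_mono)
  then have "(dist (\<sigma>1 t) (\<sigma>2 t))^2 * (dist x y * dist x z) \<le> (t * cmod (sgn y' - sgn z'))^2 * (dist x y * dist x z)"
    using assms by (intro mult_right_mono) auto
  also have "\<dots> = t^2 * ((cmod (sgn y' - sgn z'))^2 * (cmod y' * cmod z'))"
    using c by (simp add: power_mult_distrib)
  also have "\<dots> = t^2 * ((dist y z)^2 - (dist x y - dist x z)^2)"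
    using sgn_diff_identity[OF nz] c by simp
  finally show ?thesis .
qed

lemma convex_two:
  fixes a b a' b' :: "'a::metric_space"
  assumes "CAT0 TYPE('a)" "geodesic_seg \<sigma>1 a b" "geodesic_seg \<sigma>2 a' b'"
    "dist a b = L" "dist a' b' = L" "0 \<le> s" "s \<le> L" "0 < L"
  shows "dist (\<sigma>1 s) (\<sigma>2 s) \<le> (1 - s/L) * dist a a' + (s/L) * dist b b'"
proof -
  have gs: "geodesic_space TYPE('a)" using assms(1) by (simp add: CAT0_def)
  obtain \<tau> where t: "geodesic_seg \<tau> a b'" using gs unfolding geodesic_space_def by blast
  define l where "l = s / L"
  have l: "0 \<le> l" "l \<le> 1" using assms by (auto simp: l_def)
  have sL: "l * L = s" using assms by (simp add: l_def)
  have 1: "dist (\<sigma>1 s) (\<tau> (l * dist a b')) \<le> l * dist b b'"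
    using common_start[OF assms(1,2) t l] assms(4) sL by simp
  have t': "geodesic_seg (\<lambda>u. \<tau> (dist a b' - u)) b' a" using geodesic_seg_rev[OF t] .
  have s': "geodesic_seg (\<lambda>u. \<sigma>2 (dist a' b' - u)) b' a'" using geodesic_seg_rev[OF assms(3)] .
  have 2: "dist (\<tau> (dist a b' - (1 - l) * dist b' a)) (\<sigma>2 (dist a' b' - (1 - l) * dist b' a')) \<le> (1 - l) * dist a a'"
    using common_start[OF assms(1) t' s', of "1 - l"] l by simp
  have e1: "dist a b' - (1 - l) * dist b' a = l * dist a b'" by (simp add: dist_commute algebra_simps)
  have e2: "dist a' b' - (1 - l) * dist b' a' = s" using assms(5) sL by (simp add: dist_commute algebra_simps)
  have "dist (\<sigma>1 s) (\<sigma>2 s) \<le> dist (\<sigma>1 s) (\<tau> (l * dist a b')) + dist (\<tau> (l * dist a b')) (\<sigma>2 s)"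
    by (rule dist_triangle)
  also have "\<dots> \<le> l * dist b b' + (1 - l) * dist a a'" using 1 2 e1 e2 by simp
  finally show ?thesis by (simp add: l_def)
qed



lemma ray_seg:
  assumes "geodesic_ray c" "0 \<le> s0" "0 \<le> l"
  shows "dist (c s0) (c (s0 + l)) = l" "geodesic_seg (\<lambda>u. c (s0 + u)) (c s0) (c (s0 + l))"
proof -
  show d: "dist (c s0) (c (s0 + l)) = l" using assms unfolding geodesic_ray_def by auto
  show "geodesic_seg (\<lambda>u. c (s0 + u)) (c s0) (c (s0 + l))"
    unfolding geodesic_seg_def d using assms unfolding geodesic_ray_def by auto
qed

lemma ray_seg0:
  assumes "geodesic_ray c" "0 \<le> l"
  shows "dist (c 0) (c l) = l" "geodesic_seg c (c 0) (c l)"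
  using ray_seg[OF assms(1) order_refl assms(2)] by simp_all

lemma ray_from:
  fixes c :: "real \<Rightarrow> 'a::metric_space"
  assumes cat: "CAT0 TYPE('a)" and ray: "geodesic_ray c"
  shows "\<exists>c'. geodesic_ray c' \<and> c' 0 = x \<and> (\<forall>t\<ge>0. dist (c t) (c' t) \<le> 2 * dist x (c 0))"
proof -
  have gs: "geodesic_space TYPE('a)" and cpl: "complete (UNIV::'a set)" using cat by (auto simp: CAT0_def)
  define a where "a = dist x (c 0)"
  have a0: "a \<ge> 0" by (simp add: a_def)
  define \<sigma> where "\<sigma> n = (SOME \<gamma>. geodesic_seg \<gamma> x (c (real n)))" for n :: nat
  have s: "geodesic_seg (\<sigma> n) x (c (real n))" for n
  proof -
    have "\<exists>\<gamma>. geodesic_seg \<gamma> x (c (real n))" using gs unfolding geodesic_space_def by blast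
    then show ?thesis unfolding \<sigma>_def by (rule someI_ex)
  qed
  define L where "L n = dist x (c (real n))" for n :: nat
  have cn: "dist (c 0) (c (real n)) = real n" for n using ray_seg0[OF ray, of "real n"] by simp
  have Lb: "real n - a \<le> L n" "L n \<le> real n + a" for n
    using dist_triangle[of "c 0" "c (real n)" x] dist_triangle[of x "c (real n)" "c 0"] cn[of n]
    by (auto simp: L_def a_def dist_commute)
  have cnm: "dist (c (real n)) (c (real m)) = real m - real n" if "n \<le> m" for n m
    using ray that unfolding geodesic_ray_def by auto
  have est: "(dist (\<sigma> n t) (\<sigma> m t))^2 * (real n - a) \<le> 4 * a * t^2"
    if nm: "n \<le> m" and t0: "0 \<le> t" and nb: "real n \<ge> 2 * a + t + 1" for n m t
  proof -
    define A where "A = L n"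
    define C where "C = L m"
    define B where "B = real m - real n"
    have mb: "real m \<ge> real n" using nm by simp
    have A1: "A \<ge> real n - a" "A \<le> real n + a" "C \<ge> real m - a" "C \<le> real m + a"
      using Lb by (auto simp: A_def C_def)
    have tA: "t \<le> A" "t \<le> C" "0 < A" "0 < C" using A1 nb mb a0 t0 by linarith+
    have tri: "C \<le> A + B" "A \<le> C + B"
      using dist_triangle[of x "c (real m)" "c (real n)"] dist_triangle[of x "c (real n)" "c (real m)"]
        cnm[OF nm] by (auto simp: A_def C_def B_def L_def dist_commute)
    define d where "d = dist (\<sigma> n t) (\<sigma> m t)"
    have ce: "d^2 * (A * C) \<le> t^2 * (B^2 - (A - C)^2)"
    proof -
      have "0 < dist x (c (real n))" "0 < dist x (c (real m))" "t \<le> dist x (c (real n))" "t \<le> dist x (c (real m))"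
        using tA unfolding A_def C_def L_def by simp_all
      from cauchy_est[OF cat s[of n] s[of m] t0 this(3,4,1,2)] cnm[OF nm]
      show ?thesis unfolding d_def A_def C_def B_def L_def by simp
    qed
    have P: "0 \<le> B - C + A" "B - C + A \<le> 2 * a" using tri A1 by (auto simp: B_def)
    have Q: "0 \<le> B + C - A" "B + C - A \<le> 2 * (real m - real n) + 2 * a" using tri A1 by (auto simp: B_def)
    have "B^2 - (A - C)^2 = (B - C + A) * (B + C - A)" by (simp add: power2_eq_square algebra_simps)
    also have "\<dots> \<le> (2 * a) * (2 * (real m - real n) + 2 * a)"
      using P Q by (intro mult_mono) auto
    also have "\<dots> \<le> (2 * a) * (2 * (real m - a))" using nb a0 t0 by (intro mult_left_mono) auto
    finally have "t^2 * (B^2 - (A - C)^2) \<le> t^2 * ((2 * a) * (2 * (real m - a)))"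
      by (intro mult_left_mono) auto
    with ce have 1: "d^2 * (A * C) \<le> 4 * a * t^2 * (real m - a)" by (simp add: algebra_simps)
    have "d^2 * ((real n - a) * (real m - a)) \<le> d^2 * (A * C)"
      using A1 nb mb a0 t0 tA by (intro mult_left_mono mult_mono) auto
    with 1 have "(d^2 * (real n - a)) * (real m - a) \<le> (4 * a * t^2) * (real m - a)"
      by (simp add: algebra_simps)
    moreover have "real m - a > 0" using nb mb a0 t0 by linarith
    ultimately show ?thesis unfolding d_def by simp
  qed
  have cauchy: "Cauchy (\<lambda>n. \<sigma> n t)" if t0: "0 \<le> t" for t
  proof (unfold Cauchy_def, intro allI impI)
    fix e :: real assume e: "0 < e"
    obtain N :: nat where N: "real N \<ge> 2 * a + t + 1 + 4 * a * t^2 / e^2" using real_arch_simple by blast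
    have "dist (\<sigma> m t) (\<sigma> n t) < e" if "m \<ge> N" "n \<ge> N" for m n
    proof -
      have gen: "dist (\<sigma> n t) (\<sigma> m t) < e" if nm: "n \<le> m" "n \<ge> N" for n m
      proof -
        have nb: "real n \<ge> 2 * a + t + 1 + 4 * a * t^2 / e^2" using N nm by linarith
        have q: "4 * a * t^2 / e^2 \<ge> 0" using a0 by simp
        have e1: "(dist (\<sigma> n t) (\<sigma> m t))^2 * (real n - a) \<le> 4 * a * t^2"
          using est[OF nm(1) t0] nb q by linarith
        have pos: "real n - a > 4 * a * t^2 / e^2" using nb a0 t0 by linarith
        then have "4 * a * t^2 < e^2 * (real n - a)" using e by (simp add: field_simps)
        with e1 have "(dist (\<sigma> n t) (\<sigma> m t))^2 * (real n - a) < e^2 * (real n - a)" by linarith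
        then have "(dist (\<sigma> n t) (\<sigma> m t))^2 < e^2" using pos q
          by (smt (verit) mult_right_mono)
        then show ?thesis using e by (simp add: power_less_imp_less_base)
      qed
      show ?thesis
      proof (cases "n \<le> m")
        case True then show ?thesis using gen[of n m] that by (simp add: dist_commute)
      next
        case False then show ?thesis using gen[of m n] that by simp
      qed
    qed
    then show "\<exists>M. \<forall>m\<ge>M. \<forall>n\<ge>M. dist (\<sigma> m t) (\<sigma> n t) < e" by blast
  qed
  define c' where "c' t = lim (\<lambda>n. \<sigma> n t)" for t
  have lim: "(\<lambda>n. \<sigma> n t) \<longlonglongrightarrow> c' t" if t0: "0 \<le> t" for t
  proof -
    obtain l where "(\<lambda>n. \<sigma> n t) \<longlonglongrightarrow> l" using cpl cauchy[OF t0] unfolding complete_def by blast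
    then show ?thesis unfolding c'_def by (simp add: limI)
  qed
  have ev_large: "\<forall>\<^sub>F n in sequentially. real n \<ge> r" for r :: real
  proof -
    obtain N :: nat where "real N \<ge> r" using real_arch_simple by blast
    then show ?thesis unfolding eventually_sequentially by (intro exI[of _ N]) auto
  qed
  have gr: "geodesic_ray c'"
    unfolding geodesic_ray_def
  proof (intro allI impI)
    fix s t :: real assume st: "0 \<le> s" "0 \<le> t"
    have l1: "(\<lambda>n. dist (\<sigma> n s) (\<sigma> n t)) \<longlonglongrightarrow> dist (c' s) (c' t)"
      by (intro tendsto_dist lim st)
    have "\<forall>\<^sub>F n in sequentially. dist (\<sigma> n s) (\<sigma> n t) = \<bar>s - t\<bar>"
      using ev_large[of "s + t + a"]
    proof eventually_elim
      case (elim n)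
      then have "s \<le> L n" "t \<le> L n" using Lb[of n] st by linarith+
      then show ?case using s[of n] st unfolding geodesic_seg_def L_def by auto
    qed
    then have "(\<lambda>n. dist (\<sigma> n s) (\<sigma> n t)) \<longlonglongrightarrow> \<bar>s - t\<bar>"
      by (rule tendsto_eventually)
    then show "dist (c' s) (c' t) = \<bar>s - t\<bar>" using l1 LIMSEQ_unique by blast
  qed
  have c0: "c' 0 = x"
  proof -
    have "\<sigma> n 0 = x" for n using s[of n] unfolding geodesic_seg_def by simp
    then have "(\<lambda>n. \<sigma> n 0) \<longlonglongrightarrow> x" by simp
    then show ?thesis using lim[of 0] LIMSEQ_unique by auto
  qed
  have bd: "dist (c t) (c' t) \<le> 2 * a" if t0: "0 \<le> t" for t
  proof -
    have l1: "(\<lambda>n. dist (c t) (\<sigma> n t)) \<longlonglongrightarrow> dist (c t) (c' t)"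
      by (intro tendsto_dist lim t0 tendsto_const)
    have "\<forall>\<^sub>F n in sequentially. dist (c t) (\<sigma> n t) \<le> 2 * a"
      using ev_large[of "t + a + 1"]
    proof eventually_elim
      case (elim n)
      define N where "N = real n"
      have Np: "N > 0" "t \<le> N" using elim a0 t0 by (auto simp: N_def)
      have LN: "t \<le> L n" "L n \<le> N + a" "N - a \<le> L n" using Lb[of n] elim by (auto simp: N_def)
      define l where "l = 1 - t / N"
      have l: "0 \<le> l" "l \<le> 1" using Np t0 by (auto simp: l_def)
      have r1: "geodesic_seg (\<lambda>u. \<sigma> n (L n - u)) (c N) x"
        using geodesic_seg_rev[OF s[of n]] by (simp add: L_def N_def)
      have r2: "geodesic_seg (\<lambda>u. c (N - u)) (c N) (c 0)"
        using geodesic_seg_rev[OF ray_seg0(2)[OF ray, of N]] ray_seg0(1)[OF ray, of N] Np by simp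
      have cs: "dist (\<sigma> n (L n - l * dist (c N) x)) (c (N - l * dist (c N) (c 0))) \<le> l * dist x (c 0)"
        using common_start[OF cat r1 r2 l] by simp
      have dd: "dist (c N) x = L n" "dist (c N) (c 0) = N"
        using ray_seg0(1)[OF ray, of N] Np by (auto simp: L_def N_def dist_commute)
      have e1: "N - l * N = t" using Np by (simp add: l_def algebra_simps)
      have e2: "L n - l * L n = t * L n / N" using Np by (simp add: l_def field_simps)
      have cs2: "dist (\<sigma> n (t * L n / N)) (c t) \<le> a"
      proof -
        have "dist (\<sigma> n (t * L n / N)) (c t) \<le> l * a" using cs dd e1 e2 by (simp add: a_def)
        also have "\<dots> \<le> a" using l a0 by (simp add: mult_left_le_one_le)
        finally show ?thesis .
      qed
      have in1: "0 \<le> t * L n / N" "t * L n / N \<le> L n"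
        using Np LN t0 by (auto simp: field_simps intro: mult_right_mono)
      have "dist (\<sigma> n t) (\<sigma> n (t * L n / N)) = \<bar>t - t * L n / N\<bar>"
        using s[of n] in1 LN t0 unfolding geodesic_seg_def L_def by auto
      also have "\<bar>t - t * L n / N\<bar> = t * \<bar>N - L n\<bar> / N"
      proof -
        have "t - t * L n / N = t * (N - L n) / N" using Np by (simp add: field_simps)
        then show ?thesis using Np t0 by (simp add: abs_mult)
      qed
      also have "\<dots> \<le> t * a / N" using LN Np t0 by (intro divide_right_mono mult_left_mono) auto
      also have "\<dots> \<le> a" using Np a0 t0 by (simp add: field_simps) (metis mult.commute mult_left_mono)
      finally have "dist (\<sigma> n t) (\<sigma> n (t * L n / N)) \<le> a" .
      then show ?case using cs2 dist_triangle[of "c t" "\<sigma> n t" "\<sigma> n (t * L n / N)"]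
        by (simp add: dist_commute)
    qed
    then show ?thesis using l1 by (intro LIMSEQ_le_const2) (auto simp: eventually_sequentially)
  qed
  show ?thesis using gr c0 bd unfolding a_def by blast
qed



lemma act_iso:
  assumes "isometric_action G \<phi>" "h \<in> carrier G"
  shows "dist (\<phi> h x) (\<phi> h y) = dist x y"
  using assms unfolding isometric_action_def by blast

lemma act_mult:
  assumes "isometric_action G \<phi>" "h \<in> carrier G" "k \<in> carrier G"
  shows "\<phi> (h \<otimes>\<^bsub>G\<^esub> k) x = \<phi> h (\<phi> k x)"
  using assms unfolding isometric_action_def by simp

lemma act_one:
  assumes "isometric_action G \<phi>"
  shows "\<phi> \<one>\<^bsub>G\<^esub> x = x"
  using assms unfolding isometric_action_def by simp

lemma act_inv:
  assumes "group G" "isometric_action G \<phi>" "h \<in> carrier G"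
  shows "\<phi> (inv\<^bsub>G\<^esub> h) (\<phi> h x) = x" "\<phi> h (\<phi> (inv\<^bsub>G\<^esub> h) x) = x"
proof -
  interpret G: group G by fact
  show "\<phi> (inv\<^bsub>G\<^esub> h) (\<phi> h x) = x"
    using act_mult[OF assms(2) G.inv_closed[OF assms(3)] assms(3), of x] act_one[OF assms(2)] assms(3) by simp
  show "\<phi> h (\<phi> (inv\<^bsub>G\<^esub> h) x) = x"
    using act_mult[OF assms(2) assms(3) G.inv_closed[OF assms(3)], of x] act_one[OF assms(2)] assms(3) by simp
qed

lemma iso_cont:
  assumes "\<forall>x y. dist (f x) (f y) = dist x y"
  shows "continuous_on S f"
  unfolding continuous_on_iff using assms by metis

lemma proper_finite_compact:
  fixes \<phi> :: "'g \<Rightarrow> 'a::metric_space \<Rightarrow> 'a"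
  assumes grp: "group G" and iso: "isometric_action G \<phi>" and pa: "properly_acting G \<phi>"
    and K: "compact K"
  shows "finite {h\<in>carrier G. \<phi> h ` K \<inter> K \<noteq> {}}"
proof (rule ccontr)
  interpret G: group G by fact
  define S where "S = {h\<in>carrier G. \<phi> h ` K \<inter> K \<noteq> {}}"
  assume "infinite {h\<in>carrier G. \<phi> h ` K \<inter> K \<noteq> {}}"
  then obtain f :: "nat \<Rightarrow> 'g" where f: "inj f" "range f \<subseteq> S"
    using infinite_countable_subset unfolding S_def by blast
  have "\<exists>k. k \<in> K \<and> \<phi> (f n) k \<in> K" for n using f(2) unfolding S_def by blast
  then obtain k where k: "\<And>n. k n \<in> K" "\<And>n. \<phi> (f n) (k n) \<in> K" by metis
  have fc: "f n \<in> carrier G" for n using f(2) unfolding S_def by blast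
  have "seq_compact (K \<times> K)" by (intro compact_imp_seq_compact compact_Times K)
  then obtain l r where l: "l \<in> K \<times> K" and r: "strict_mono r"
    and lim: "((\<lambda>n. (k n, \<phi> (f n) (k n))) \<circ> r) \<longlonglongrightarrow> l"
    using seq_compactE[OF \<open>seq_compact (K \<times> K)\<close>, of "\<lambda>n. (k n, \<phi> (f n) (k n))"] k by blast
  obtain k0 k1 where l01: "l = (k0, k1)" by (cases l)
  have lim0: "(\<lambda>n. k (r n)) \<longlonglongrightarrow> k0" using tendsto_fst[OF lim] l01 by (simp add: o_def)
  have lim1: "(\<lambda>n. \<phi> (f (r n)) (k (r n))) \<longlonglongrightarrow> k1" using tendsto_snd[OF lim] l01 by (simp add: o_def)
  obtain \<rho> where \<rho>: "\<rho> > 0" and fin: "finite {h\<in>carrier G. \<phi> h ` ball k0 \<rho> \<inter> ball k0 \<rho> \<noteq> {}}"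
    using pa unfolding properly_acting_def by blast
  have "\<forall>\<^sub>F n in sequentially. dist (k (r n)) k0 < \<rho>/4"
    using tendsto_iff[THEN iffD1, OF lim0, rule_format, of "\<rho>/4"] \<rho> by simp
  moreover have "\<forall>\<^sub>F n in sequentially. dist (\<phi> (f (r n)) (k (r n))) k1 < \<rho>/4"
    using tendsto_iff[THEN iffD1, OF lim1, rule_format, of "\<rho>/4"] \<rho> by simp
  ultimately have "\<forall>\<^sub>F n in sequentially. dist (k (r n)) k0 < \<rho>/4 \<and> dist (\<phi> (f (r n)) (k (r n))) k1 < \<rho>/4"
    by eventually_elim auto
  then obtain N where N: "\<And>n. n \<ge> N \<Longrightarrow> dist (k (r n)) k0 < \<rho>/4 \<and> dist (\<phi> (f (r n)) (k (r n))) k1 < \<rho>/4"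
    unfolding eventually_sequentially by blast
  define a where "a = f (r N)"
  have ac: "a \<in> carrier G" by (simp add: a_def fc)
  define u where "u n = inv\<^bsub>G\<^esub> a \<otimes>\<^bsub>G\<^esub> f (r n)" for n
  have uin: "u n \<in> {h\<in>carrier G. \<phi> h ` ball k0 \<rho> \<inter> ball k0 \<rho> \<noteq> {}}" if n: "n \<ge> N" for n
  proof -
    have uc: "u n \<in> carrier G" using ac fc by (simp add: u_def)
    have pu: "\<phi> (u n) (k (r n)) = \<phi> (inv\<^bsub>G\<^esub> a) (\<phi> (f (r n)) (k (r n)))"
      unfolding u_def using act_mult[OF iso G.inv_closed[OF ac] fc] by simp
    have "dist (\<phi> (u n) (k (r n))) (k (r N)) = dist (\<phi> (f (r n)) (k (r n))) (\<phi> a (k (r N)))"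
    proof -
      have "dist (\<phi> (u n) (k (r n))) (k (r N)) = dist (\<phi> a (\<phi> (u n) (k (r n)))) (\<phi> a (k (r N)))"
        using act_iso[OF iso ac] by simp
      also have "\<phi> a (\<phi> (u n) (k (r n))) = \<phi> (f (r n)) (k (r n))"
        using pu act_inv(2)[OF grp iso ac] by simp
      finally show ?thesis .
    qed
    also have "\<dots> \<le> dist (\<phi> (f (r n)) (k (r n))) k1 + dist k1 (\<phi> a (k (r N)))" by (rule dist_triangle)
    also have "\<dots> < \<rho>/2" using N[OF n] N[of N] by (simp add: a_def dist_commute)
    finally have d1: "dist (\<phi> (u n) (k (r n))) (k (r N)) < \<rho>/2" .
    have "dist k0 (\<phi> (u n) (k (r n))) \<le> dist k0 (k (r N)) + dist (k (r N)) (\<phi> (u n) (k (r n)))"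
      by (rule dist_triangle)
    also have "\<dots> < \<rho>" using d1 N[of N] \<rho> by (simp add: dist_commute)
    finally have "\<phi> (u n) (k (r n)) \<in> ball k0 \<rho>" by simp
    moreover have "k (r n) \<in> ball k0 \<rho>" using N[OF n] \<rho> by (simp add: dist_commute)
    ultimately show ?thesis using uc by blast
  qed
  have "inj_on u {N..}"
  proof (rule inj_onI)
    fix m n assume "u m = u n"
    then have "f (r m) = f (r n)" unfolding u_def using ac fc by (simp add: G.Units_eq)
    then have "r m = r n" by (rule injD[OF f(1)])
    then show "m = n" using strict_mono_eq[OF r] by simp
  qed
  moreover have "infinite {N::nat..}" by (rule infinite_Ici)
  ultimately have "infinite (u ` {N..})" using finite_imageD by blast
  moreover have "u ` {N..} \<subseteq> {h\<in>carrier G. \<phi> h ` ball k0 \<rho> \<inter> ball k0 \<rho> \<noteq> {}}" using uin by auto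
  ultimately show False using fin finite_subset by blast
qed

lemma transl_le:
  "transl_length (f :: 'a::metric_space \<Rightarrow> 'a) \<le> dist x (f x)"
  unfolding transl_length_def by (rule cINF_lower) (auto intro: bdd_belowI[of _ 0])

lemma transl_nonneg:
  "transl_length (f :: 'a::metric_space \<Rightarrow> 'a) \<ge> 0"
  unfolding transl_length_def by (rule cINF_greatest) auto

lemma transl_less:
  "transl_length (f :: 'a::metric_space \<Rightarrow> 'a) < b \<Longrightarrow> \<exists>x. dist x (f x) < b"
  unfolding transl_length_def by (subst (asm) cINF_less_iff) (auto intro: bdd_belowI[of _ 0])

lemma conj_comm:
  assumes "group G" "g \<in> carrier G" "h \<in> carrier G" "h' \<in> carrier G"
    "inv\<^bsub>G\<^esub> h \<otimes>\<^bsub>G\<^esub> g \<otimes>\<^bsub>G\<^esub> h = inv\<^bsub>G\<^esub> h' \<otimes>\<^bsub>G\<^esub> g \<otimes>\<^bsub>G\<^esub> h'"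
  shows "g \<otimes>\<^bsub>G\<^esub> (h \<otimes>\<^bsub>G\<^esub> inv\<^bsub>G\<^esub> h') = (h \<otimes>\<^bsub>G\<^esub> inv\<^bsub>G\<^esub> h') \<otimes>\<^bsub>G\<^esub> g"
proof -
  interpret G: group G by fact
  have "h \<otimes>\<^bsub>G\<^esub> (inv\<^bsub>G\<^esub> h \<otimes>\<^bsub>G\<^esub> g \<otimes>\<^bsub>G\<^esub> h) \<otimes>\<^bsub>G\<^esub> inv\<^bsub>G\<^esub> h'
      = h \<otimes>\<^bsub>G\<^esub> (inv\<^bsub>G\<^esub> h' \<otimes>\<^bsub>G\<^esub> g \<otimes>\<^bsub>G\<^esub> h') \<otimes>\<^bsub>G\<^esub> inv\<^bsub>G\<^esub> h'"
    using assms(5) by simp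
  moreover have "h \<otimes>\<^bsub>G\<^esub> (inv\<^bsub>G\<^esub> h \<otimes>\<^bsub>G\<^esub> g \<otimes>\<^bsub>G\<^esub> h) \<otimes>\<^bsub>G\<^esub> inv\<^bsub>G\<^esub> h' = g \<otimes>\<^bsub>G\<^esub> (h \<otimes>\<^bsub>G\<^esub> inv\<^bsub>G\<^esub> h')"
  proof -
    have hx: "h \<otimes>\<^bsub>G\<^esub> (inv\<^bsub>G\<^esub> h \<otimes>\<^bsub>G\<^esub> x) = x" if "x \<in> carrier G" for x
      using that assms(3) by (metis G.inv_closed G.l_one G.m_assoc G.r_inv)
    show ?thesis using assms(2-4) hx by (simp add: G.m_assoc)
  qed
  moreover have "h \<otimes>\<^bsub>G\<^esub> (inv\<^bsub>G\<^esub> h' \<otimes>\<^bsub>G\<^esub> g \<otimes>\<^bsub>G\<^esub> h') \<otimes>\<^bsub>G\<^esub> inv\<^bsub>G\<^esub> h' = (h \<otimes>\<^bsub>G\<^esub> inv\<^bsub>G\<^esub> h') \<otimes>\<^bsub>G\<^esub> g"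
    using assms(2-4) by (simp add: G.m_assoc)
  ultimately show ?thesis by simp
qed



lemma min_cocompact:
  fixes \<phi> :: "'g \<Rightarrow> 'a::metric_space \<Rightarrow> 'a"
  assumes grp: "group G" and ga: "geometric_action G \<phi>" and pr: "proper_space TYPE('a)"
    and gc: "g \<in> carrier G"
  shows "Min_set (\<phi> g) \<noteq> {} \<and> (\<exists>D. \<forall>x\<in>Min_set (\<phi> g). \<exists>z\<in>centralizer G g. dist x (\<phi> z x0) \<le> D)"
proof -
  interpret G: group G by fact
  have iso: "isometric_action G \<phi>" and pa: "properly_acting G \<phi>" and cc: "cocompact_action G \<phi>"
    using ga unfolding geometric_action_def by auto
  obtain K where K: "compact K" and cov: "\<And>x. \<exists>h\<in>carrier G. x \<in> \<phi> h ` K"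
    using cc unfolding cocompact_action_def by blast
  obtain k0 where k0: "k0 \<in> K" using cov[of undefined] by blast
  obtain R0 where R0: "\<And>k. k \<in> K \<Longrightarrow> dist k0 k \<le> R0"
    using compact_imp_bounded[OF K] unfolding bounded_any_center[of K k0] by blast
  define a where "a = transl_length (\<phi> g)"
  have a0: "a \<ge> 0" unfolding a_def by (rule transl_nonneg)
  define Kb where "Kb = cball k0 (R0 + a + 1)"
  have Kb: "compact Kb" using pr unfolding proper_space_def Kb_def by blast
  define F where "F = {h\<in>carrier G. \<phi> h ` Kb \<inter> Kb \<noteq> {}}"
  have finF: "finite F" unfolding F_def by (rule proper_finite_compact[OF grp iso pa Kb])
  define C where "C = {\<gamma>\<in>F. \<exists>h\<in>carrier G. \<gamma> = inv\<^bsub>G\<^esub> h \<otimes>\<^bsub>G\<^esub> g \<otimes>\<^bsub>G\<^esub> h}"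
  have finC: "finite C" using finF unfolding C_def by simp
  have Cc: "\<gamma> \<in> carrier G" if "\<gamma> \<in> C" for \<gamma> using that unfolding C_def F_def by blast
  have dec: "dist k (\<phi> (inv\<^bsub>G\<^esub> h \<otimes>\<^bsub>G\<^esub> g \<otimes>\<^bsub>G\<^esub> h) k) = dist (\<phi> h k) (\<phi> g (\<phi> h k))"
    if hc: "h \<in> carrier G" for h k
  proof -
    have "\<phi> (inv\<^bsub>G\<^esub> h \<otimes>\<^bsub>G\<^esub> g \<otimes>\<^bsub>G\<^esub> h) k = \<phi> (inv\<^bsub>G\<^esub> h) (\<phi> g (\<phi> h k))"
      using hc gc by (simp add: act_mult[OF iso])
    then have "dist k (\<phi> (inv\<^bsub>G\<^esub> h \<otimes>\<^bsub>G\<^esub> g \<otimes>\<^bsub>G\<^esub> h) k) = dist (\<phi> h k) (\<phi> h (\<phi> (inv\<^bsub>G\<^esub> h) (\<phi> g (\<phi> h k))))"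
      using act_iso[OF iso hc] by simp
    also have "\<dots> = dist (\<phi> h k) (\<phi> g (\<phi> h k))" using act_inv(2)[OF grp iso hc] by simp
    finally show ?thesis .
  qed
  have inC: "inv\<^bsub>G\<^esub> h \<otimes>\<^bsub>G\<^esub> g \<otimes>\<^bsub>G\<^esub> h \<in> C"
    if hc: "h \<in> carrier G" and kK: "k \<in> K" and d: "dist (\<phi> h k) (\<phi> g (\<phi> h k)) \<le> a + 1" for h k
  proof -
    define \<gamma> where "\<gamma> = inv\<^bsub>G\<^esub> h \<otimes>\<^bsub>G\<^esub> g \<otimes>\<^bsub>G\<^esub> h"
    have gcar: "\<gamma> \<in> carrier G" using hc gc by (simp add: \<gamma>_def)
    have "k \<in> Kb" using R0[OF kK] a0 by (simp add: Kb_def)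
    moreover have "\<phi> \<gamma> k \<in> Kb"
    proof -
      have "dist k0 (\<phi> \<gamma> k) \<le> dist k0 k + dist k (\<phi> \<gamma> k)" by (rule dist_triangle)
      also have "\<dots> \<le> R0 + (a + 1)" using R0[OF kK] d dec[OF hc, of k] by (simp add: \<gamma>_def)
      finally show ?thesis by (simp add: Kb_def)
    qed
    ultimately have "\<gamma> \<in> F" using gcar unfolding F_def by blast
    then show ?thesis unfolding C_def \<gamma>_def using hc by blast
  qed
  define V where "V = (\<Union>\<gamma>\<in>C. (\<lambda>k. dist k (\<phi> \<gamma> k)) ` K)"
  have cV: "compact V" unfolding V_def
  proof (intro compact_UN finC compact_continuous_image K)
    fix \<gamma> assume "\<gamma> \<in> C"
    then have "continuous_on K (\<phi> \<gamma>)" using act_iso[OF iso Cc] by (intro iso_cont) auto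
    then show "continuous_on K (\<lambda>k. dist k (\<phi> \<gamma> k))" by (intro continuous_on_dist continuous_on_id)
  qed
  have Vge: "v \<ge> a" if vV: "v \<in> V" for v
  proof -
    obtain \<gamma> k where "\<gamma> \<in> C" "k \<in> K" "v = dist k (\<phi> \<gamma> k)" using vV unfolding V_def by blast
    then obtain h where h: "h \<in> carrier G" "\<gamma> = inv\<^bsub>G\<^esub> h \<otimes>\<^bsub>G\<^esub> g \<otimes>\<^bsub>G\<^esub> h" "v = dist k (\<phi> \<gamma> k)"
      unfolding C_def by blast
    then show ?thesis using dec[OF h(1), of k] transl_le[of "\<phi> g" "\<phi> h k"] by (simp add: a_def)
  qed
  have Vsmall: "\<exists>v\<in>V. v < b" if b: "b > a" "b \<le> a + 1" for b
  proof -
    obtain x where x: "dist x (\<phi> g x) < b" using transl_less[of "\<phi> g" b] b by (auto simp: a_def)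
    obtain h k where hk: "h \<in> carrier G" "k \<in> K" "x = \<phi> h k" using cov[of x] by blast
    have "inv\<^bsub>G\<^esub> h \<otimes>\<^bsub>G\<^esub> g \<otimes>\<^bsub>G\<^esub> h \<in> C" using inC[OF hk(1,2)] x b hk(3) by simp
    then have "dist k (\<phi> (inv\<^bsub>G\<^esub> h \<otimes>\<^bsub>G\<^esub> g \<otimes>\<^bsub>G\<^esub> h) k) \<in> V" using hk(2) unfolding V_def by blast
    then show ?thesis using dec[OF hk(1), of k] x hk(3) by auto
  qed
  have Vne: "V \<noteq> {}" using Vsmall[of "a + 1"] by auto
  obtain m where m: "m \<in> V" and mmin: "\<And>v. v \<in> V \<Longrightarrow> m \<le> v"
    using compact_attains_inf[OF cV Vne] by blast
  have "m \<le> a"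
  proof (rule ccontr)
    assume "\<not> m \<le> a"
    then obtain v where "v \<in> V" "v < min m (a + 1)" using Vsmall[of "min m (a+1)"] by auto
    then show False using mmin by force
  qed
  with Vge[OF m] have ma: "m = a" by simp
  obtain \<gamma> k where gk: "\<gamma> \<in> C" "k \<in> K" "m = dist k (\<phi> \<gamma> k)" using m unfolding V_def by blast
  then obtain h where h: "h \<in> carrier G" "\<gamma> = inv\<^bsub>G\<^esub> h \<otimes>\<^bsub>G\<^esub> g \<otimes>\<^bsub>G\<^esub> h" unfolding C_def by blast
  have "\<phi> h k \<in> Min_set (\<phi> g)"
    using dec[OF h(1), of k] gk ma h unfolding Min_set_def a_def by simp
  then have ne: "Min_set (\<phi> g) \<noteq> {}" by blast
  define hs where "hs \<gamma> = (SOME h. h \<in> carrier G \<and> \<gamma> = inv\<^bsub>G\<^esub> h \<otimes>\<^bsub>G\<^esub> g \<otimes>\<^bsub>G\<^esub> h)" for \<gamma>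
  have hs: "hs \<gamma> \<in> carrier G \<and> \<gamma> = inv\<^bsub>G\<^esub> (hs \<gamma>) \<otimes>\<^bsub>G\<^esub> g \<otimes>\<^bsub>G\<^esub> (hs \<gamma>)" if "\<gamma> \<in> C" for \<gamma>
  proof -
    have "\<exists>h. h \<in> carrier G \<and> \<gamma> = inv\<^bsub>G\<^esub> h \<otimes>\<^bsub>G\<^esub> g \<otimes>\<^bsub>G\<^esub> h" using \<open>\<gamma> \<in> C\<close> unfolding C_def by blast
    then show ?thesis unfolding hs_def by (rule someI_ex)
  qed
  define D where "D = R0 + (\<Sum>\<gamma>\<in>C. dist (\<phi> (hs \<gamma>) k0) x0)"
  have "\<exists>z\<in>centralizer G g. dist x (\<phi> z x0) \<le> D" if xM: "x \<in> Min_set (\<phi> g)" for x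
  proof -
    obtain h k where hk: "h \<in> carrier G" "k \<in> K" "x = \<phi> h k" using cov[of x] by blast
    define \<gamma> where "\<gamma> = inv\<^bsub>G\<^esub> h \<otimes>\<^bsub>G\<^esub> g \<otimes>\<^bsub>G\<^esub> h"
    have "dist x (\<phi> g x) = a" using xM unfolding Min_set_def a_def by simp
    then have gC: "\<gamma> \<in> C" unfolding \<gamma>_def using inC[OF hk(1,2)] hk(3) by simp
    define h' where "h' = hs \<gamma>"
    have h': "h' \<in> carrier G" "\<gamma> = inv\<^bsub>G\<^esub> h' \<otimes>\<^bsub>G\<^esub> g \<otimes>\<^bsub>G\<^esub> h'" using hs[OF gC] by (auto simp: h'_def)
    define z where "z = h \<otimes>\<^bsub>G\<^esub> inv\<^bsub>G\<^esub> h'"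
    have zc: "z \<in> carrier G" using hk h' by (simp add: z_def)
    have "g \<otimes>\<^bsub>G\<^esub> z = z \<otimes>\<^bsub>G\<^esub> g"
      unfolding z_def by (rule conj_comm[OF grp gc hk(1) h'(1)]) (use h' \<gamma>_def in simp)
    then have zZ: "z \<in> centralizer G g" using zc unfolding centralizer_def by blast
    have "\<phi> z (\<phi> h' k) = x"
      using act_mult[OF iso hk(1) G.inv_closed[OF h'(1)]] act_inv(1)[OF grp iso h'(1)] hk(3)
      unfolding z_def by simp
    then have "dist x (\<phi> z x0) = dist (\<phi> h' k) x0" using act_iso[OF iso zc] by metis
    also have "\<dots> \<le> dist (\<phi> h' k) (\<phi> h' k0) + dist (\<phi> h' k0) x0" by (rule dist_triangle)
    also have "\<dots> \<le> R0 + dist (\<phi> h' k0) x0"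
      using act_iso[OF iso h'(1)] R0[OF hk(2)] by (simp add: dist_commute)
    also have "dist (\<phi> h' k0) x0 \<le> (\<Sum>\<gamma>\<in>C. dist (\<phi> (hs \<gamma>) k0) x0)"
      unfolding h'_def by (rule member_le_sum[OF gC _ finC]) auto
    finally show ?thesis using zZ by (auto simp: D_def)
  qed
  then show ?thesis using ne by blast
qed



lemma asym_refl: "asymptotic c c"
  unfolding asymptotic_def by (intro exI[of _ 0]) simp

lemma asym_sym: "asymptotic c c' \<Longrightarrow> asymptotic c' c"
  unfolding asymptotic_def by (simp add: dist_commute)

lemma asym_trans: "asymptotic c c' \<Longrightarrow> asymptotic c' c'' \<Longrightarrow> asymptotic c c''"
  unfolding asymptotic_def
proof -
  assume "\<exists>B. \<forall>t\<ge>0. dist (c t) (c' t) \<le> B" "\<exists>B. \<forall>t\<ge>0. dist (c' t) (c'' t) \<le> B"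
  then obtain B1 B2 where "\<forall>t\<ge>0. dist (c t) (c' t) \<le> B1" "\<forall>t\<ge>0. dist (c' t) (c'' t) \<le> B2" by blast
  then have "\<forall>t\<ge>0. dist (c t) (c'' t) \<le> B1 + B2"
    by (smt (verit) dist_triangle)
  then show "\<exists>B. \<forall>t\<ge>0. dist (c t) (c'' t) \<le> B" by blast
qed

lemma ray_class_eq:
  assumes "asymptotic c c'"
  shows "ray_class c = ray_class c'"
  unfolding ray_class_def using assms asym_sym asym_trans by blast

lemma vb_elem:
  fixes \<xi> :: "(real \<Rightarrow> 'a::metric_space) set"
  assumes "\<xi> \<in> visual_boundary TYPE('a)"
  obtains c0 where "geodesic_ray c0" "\<xi> = ray_class c0"
  using assms unfolding visual_boundary_def by blast

lemma class_bound:
  assumes "c1 \<in> ray_class c0" "c2 \<in> ray_class c0"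
  shows "\<exists>B. \<forall>t\<ge>0. dist (c1 t) (c2 t) \<le> B"
  using assms unfolding ray_class_def by (metis asym_sym asym_trans asymptotic_def mem_Collect_eq)

lemma self_in_class: "geodesic_ray c \<Longrightarrow> c \<in> ray_class c"
  unfolding ray_class_def using asym_refl by blast

lemma iso_ray:
  assumes "\<forall>x y. dist (f x) (f y) = dist x y" "geodesic_ray c"
  shows "geodesic_ray (f \<circ> c)"
  using assms unfolding geodesic_ray_def by simp

lemma iso_seg:
  assumes "\<forall>x y. dist (f x) (f y) = dist x y" "geodesic_seg \<gamma> x y"
  shows "geodesic_seg (f \<circ> \<gamma>) (f x) (f y)"
  using assms unfolding geodesic_seg_def by simp

lemma geod_pt_seg:
  assumes "CAT0 TYPE('a::metric_space)"
  shows "geodesic_seg (SOME \<gamma>. geodesic_seg \<gamma> p (x::'a)) p x"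
proof -
  have "\<exists>\<gamma>. geodesic_seg \<gamma> p x" using assms unfolding CAT0_def geodesic_space_def by blast
  then show ?thesis by (rule someI_ex)
qed

lemma ray_in_class:
  fixes c0 :: "real \<Rightarrow> 'a::metric_space"
  assumes "CAT0 TYPE('a)" "geodesic_ray c0"
  obtains c where "c \<in> ray_class c0" "c 0 = x"
proof -
  obtain c where "geodesic_ray c" "c 0 = x" "\<forall>t\<ge>0. dist (c0 t) (c t) \<le> 2 * dist x (c0 0)"
    using ray_from[OF assms] by blast
  then show ?thesis using that unfolding ray_class_def asymptotic_def by blast
qed



lemma fixed_sub_min:
  fixes \<phi> :: "'g \<Rightarrow> 'a::metric_space \<Rightarrow> 'a"
  assumes cat: "CAT0 TYPE('a)" and iso: "isometric_action G \<phi>" and gc: "g \<in> carrier G"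
    and ne: "Min_set (\<phi> g) \<noteq> {}"
  shows "fixed_bdry \<phi> g \<subseteq> bdry_of (Min_set (\<phi> g))"
proof
  fix \<xi> assume "\<xi> \<in> fixed_bdry \<phi> g"
  then have vb: "\<xi> \<in> visual_boundary TYPE('a)" and fx: "bdry_act (\<phi> g) \<xi> = \<xi>"
    unfolding fixed_bdry_def by auto
  obtain c0 where c0: "geodesic_ray c0" "\<xi> = ray_class c0" using vb_elem[OF vb] by blast
  define f where "f = \<phi> g"
  have isof: "\<forall>x y. dist (f x) (f y) = dist x y" using act_iso[OF iso gc] by (simp add: f_def)
  define c1 where "c1 = (SOME c. c \<in> \<xi>)"
  have c1: "c1 \<in> \<xi>" unfolding c1_def using self_in_class[OF c0(1)] c0(2) by (metis someI_ex)
  have c1r: "geodesic_ray c1" using c1 c0(2) unfolding ray_class_def by blast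
  have "f \<circ> c1 \<in> ray_class (f \<circ> c1)" by (rule self_in_class[OF iso_ray[OF isof c1r]])
  then have gc1: "f \<circ> c1 \<in> \<xi>" using fx unfolding bdry_act_def c1_def f_def by simp
  obtain x where xM: "x \<in> Min_set f" using ne by (auto simp: f_def)
  obtain c where c: "c \<in> ray_class c0" "c 0 = x" using ray_in_class[OF cat c0(1)] by blast
  have cr: "geodesic_ray c" using c unfolding ray_class_def by blast
  obtain B1 where B1: "\<And>t. t \<ge> 0 \<Longrightarrow> dist (c t) ((f \<circ> c1) t) \<le> B1"
    using class_bound[OF c(1), of "f \<circ> c1"] gc1 c0(2) by blast
  obtain B2 where B2: "\<And>t. t \<ge> 0 \<Longrightarrow> dist (c1 t) (c t) \<le> B2"
    using class_bound[OF _ c(1), of c1] c1 c0(2) by blast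
  define Bd where "Bd = max 0 (B1 + B2)"
  have Bd: "dist (c t) (f (c t)) \<le> Bd" if "t \<ge> 0" for t
  proof -
    have "dist (c t) (f (c t)) \<le> dist (c t) (f (c1 t)) + dist (f (c1 t)) (f (c t))" by (rule dist_triangle)
    also have "\<dots> \<le> B1 + B2" using B1[OF that] B2[OF that] isof by simp
    finally show ?thesis unfolding Bd_def by simp
  qed
  have Bd0: "Bd \<ge> 0" by (simp add: Bd_def)
  define a where "a = transl_length f"
  have xa: "dist x (f x) = a" using xM unfolding Min_set_def a_def by simp
  have a0: "a \<ge> 0" unfolding a_def by (rule transl_nonneg)
  have le: "dist (c t) (f (c t)) \<le> a" if t0: "t \<ge> 0" for t
  proof (cases "t = 0")
    case True then show ?thesis using c(2) xa by simp
  next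
    case False
    then have tp: "t > 0" using t0 by simp
    show ?thesis
    proof (rule ccontr)
      assume na: "\<not> ?thesis"
      define \<delta> where "\<delta> = dist (c t) (f (c t)) - a"
      have dp: "\<delta> > 0" using na by (simp add: \<delta>_def)
      define w where "w = t + 1 + t * Bd / \<delta>"
      have "t * Bd / \<delta> \<ge> 0" using tp Bd0 dp by simp
      then have wt: "w > t" by (simp add: w_def)
      have wp: "w > 0" using wt tp by simp
      have s1: "geodesic_seg c x (c w)" using ray_seg0(2)[OF cr, of w] wp c(2) by simp
      have d1: "dist x (c w) = w" using ray_seg0(1)[OF cr, of w] wp c(2) by simp
      have s2: "geodesic_seg (f \<circ> c) (f x) (f (c w))" by (rule iso_seg[OF isof s1])
      have d2: "dist (f x) (f (c w)) = w" using d1 isof by simp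
      have "dist (c t) ((f \<circ> c) t) \<le> (1 - t/w) * dist x (f x) + (t/w) * dist (c w) (f (c w))"
        by (rule convex_two[OF cat s1 s2 d1 d2]) (use t0 wt wp in auto)
      also have "\<dots> \<le> (1 - t/w) * a + (t/w) * Bd"
        using Bd[of w] wp xa wt tp by (intro add_mono mult_left_mono) auto
      also have "\<dots> \<le> a + (t/w) * Bd" using a0 tp wp by (simp add: algebra_simps)
      also have "(t/w) * Bd < \<delta>"
      proof -
        have "\<delta> * t > 0" using dp tp by simp
        moreover have "\<delta> * w = \<delta> * t + \<delta> + t * Bd" using dp by (simp add: w_def field_simps)
        ultimately have "t * Bd < \<delta> * w" using dp by linarith
        then show ?thesis using wp by (simp add: field_simps)
      qed
      finally have "dist (c t) (f (c t)) < a + \<delta>" by simp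
      then show False by (simp add: \<delta>_def)
    qed
  qed
  have "c t \<in> Min_set (\<phi> g)" if "t \<ge> 0" for t
    using le[OF that] transl_le[of f "c t"] unfolding Min_set_def a_def f_def by simp
  then show "\<xi> \<in> bdry_of (Min_set (\<phi> g))" unfolding bdry_of_def using vb c(1) c0(2) by blast
qed

lemma min_sub_limit:
  fixes \<phi> :: "'g \<Rightarrow> 'a::metric_space \<Rightarrow> 'a"
  assumes cat: "CAT0 TYPE('a)"
    and Db: "\<forall>x\<in>Min_set (\<phi> g). \<exists>z\<in>centralizer G g. dist x (\<phi> z x0) \<le> D"
  shows "bdry_of (Min_set (\<phi> g)) \<subseteq> limit_set p \<phi> x0 (centralizer G g)"
proof
  fix \<xi> assume "\<xi> \<in> bdry_of (Min_set (\<phi> g))"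
  then have vb: "\<xi> \<in> visual_boundary TYPE('a)" and "\<exists>c'\<in>\<xi>. \<forall>t\<ge>0. c' t \<in> Min_set (\<phi> g)"
    unfolding bdry_of_def by auto
  then obtain c' where c': "c' \<in> \<xi>" "\<And>t. t \<ge> 0 \<Longrightarrow> c' t \<in> Min_set (\<phi> g)" by blast
  obtain c0 where c0: "geodesic_ray c0" "\<xi> = ray_class c0" using vb_elem[OF vb] by blast
  obtain c where c: "c \<in> ray_class c0" "c 0 = p" using ray_in_class[OF cat c0(1)] by blast
  have cr: "geodesic_ray c" using c unfolding ray_class_def by blast
  obtain B where B: "\<And>t. t \<ge> 0 \<Longrightarrow> dist (c t) (c' t) \<le> B"
    using class_bound[OF c(1), of c'] c' c0(2) by blast
  define K where "K = \<bar>B\<bar> + \<bar>D\<bar> + 1"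
  have Kp: "K > 0" by (simp add: K_def)
  have "in_cone_closure p ((\<lambda>a. \<phi> a x0) ` centralizer G g) \<xi>"
    unfolding in_cone_closure_def
  proof (intro bexI[of _ c] conjI allI impI)
    show "c \<in> \<xi>" "c 0 = p" using c c0 by auto
    fix r \<epsilon> :: real assume r: "r > 0" and e: "\<epsilon> > 0"
    define t where "t = r + K + 2 * r * K / \<epsilon> + 1"
    have q: "2 * r * K / \<epsilon> > 0" using r Kp e by simp
    then have tb: "t > r + K" "t > 2 * r * K / \<epsilon>" using r Kp by (auto simp: t_def)
    have tp: "t > 0" using tb r Kp by linarith
    obtain z where z: "z \<in> centralizer G g" "dist (c' t) (\<phi> z x0) \<le> D" using Db c'(2)[of t] tp by auto
    define x where "x = \<phi> z x0"
    have xS: "x \<in> (\<lambda>a. \<phi> a x0) ` centralizer G g" using z by (auto simp: x_def)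
    have dx: "dist (c t) x \<le> K"
    proof -
      have "dist (c t) x \<le> dist (c t) (c' t) + dist (c' t) x" by (rule dist_triangle)
      also have "\<dots> \<le> B + D" using B[of t] tp z by (simp add: x_def)
      finally show ?thesis by (simp add: K_def)
    qed
    have pct: "dist p (c t) = t" using ray_seg0(1)[OF cr, of t] tp c(2) by simp
    have sc: "geodesic_seg c p (c t)" using ray_seg0(2)[OF cr, of t] tp c(2) by simp
    define L where "L = dist p x"
    have Lb: "t - K \<le> L" "L \<le> t + K"
      using dist_triangle[of p x "c t"] dist_triangle[of p "c t" x] pct dx
      by (auto simp: L_def dist_commute)
    have Lr: "L > r" using Lb tb by linarith
    then have xr: "dist p x > r" by (simp add: L_def)
    define \<gamma> where "\<gamma> = (SOME \<gamma>. geodesic_seg \<gamma> p x)"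
    have sg: "geodesic_seg \<gamma> p x" unfolding \<gamma>_def by (rule geod_pt_seg[OF cat])
    have gp: "geod_pt p x r = \<gamma> r" by (simp add: geod_pt_def \<gamma>_def)
    have l: "0 \<le> r / t" "r / t \<le> 1" using r tb Kp by auto
    have cs: "dist (\<gamma> (r / t * L)) (c (r / t * t)) \<le> r / t * dist x (c t)"
      using common_start[OF cat sg sc l] pct by (simp add: L_def)
    have rt: "r / t * t = r" using tp by simp
    have cs2: "dist (\<gamma> (r / t * L)) (c r) \<le> r * K / t"
    proof -
      have "r / t * dist x (c t) \<le> r / t * K" using dx l by (intro mult_left_mono) (auto simp: dist_commute)
      then show ?thesis using cs rt by simp
    qed
    have in1a: "0 \<le> r / t * L" by (rule mult_nonneg_nonneg) (use l(1) Lr r in auto)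
    have in1b: "r / t * L \<le> L" using Lr r mult_right_mono[OF l(2), of L] by simp
    note in1 = in1a in1b
    have "dist (\<gamma> r) (\<gamma> (r / t * L)) = \<bar>r - r / t * L\<bar>"
      using sg in1 Lr r unfolding geodesic_seg_def L_def by auto
    also have "\<bar>r - r / t * L\<bar> = r * \<bar>t - L\<bar> / t"
    proof -
      have "r - r / t * L = r * (t - L) / t" using tp by (simp add: field_simps)
      then show ?thesis using tp r by (simp add: abs_mult)
    qed
    also have "\<dots> \<le> r * K / t" using Lb tp r by (intro divide_right_mono mult_left_mono) auto
    finally have d3: "dist (\<gamma> r) (\<gamma> (r / t * L)) \<le> r * K / t" .
    have "dist (geod_pt p x r) (c r) \<le> dist (\<gamma> r) (\<gamma> (r / t * L)) + dist (\<gamma> (r / t * L)) (c r)"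
      unfolding gp by (rule dist_triangle)
    also have "\<dots> \<le> r * K / t + r * K / t" using d3 cs2 by (rule add_mono)
    also have "\<dots> = 2 * r * K / t" by simp
    also have "\<dots> < \<epsilon>" using tb(2) tp e by (simp add: field_simps)
    finally have fin: "dist (geod_pt p x r) (c r) < \<epsilon>" .
    show "\<exists>x\<in>(\<lambda>a. \<phi> a x0) ` centralizer G g. dist p x > r \<and> dist (geod_pt p x r) (c r) < \<epsilon>"
      using xS xr fin by blast
  qed
  then show "\<xi> \<in> limit_set p \<phi> x0 (centralizer G g)" unfolding limit_set_def using vb by blast
qed

lemma limit_sub_fixed:
  fixes \<phi> :: "'g \<Rightarrow> 'a::metric_space \<Rightarrow> 'a"
  assumes cat: "CAT0 TYPE('a)" and grp: "group G" and iso: "isometric_action G \<phi>" and gc: "g \<in> carrier G"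
  shows "limit_set p \<phi> x0 (centralizer G g) \<subseteq> fixed_bdry \<phi> g"
proof
  interpret G: group G by fact
  fix \<xi> assume "\<xi> \<in> limit_set p \<phi> x0 (centralizer G g)"
  then have vb: "\<xi> \<in> visual_boundary TYPE('a)"
    and "in_cone_closure p ((\<lambda>a. \<phi> a x0) ` centralizer G g) \<xi>"
    unfolding limit_set_def by auto
  then obtain c where c: "c \<in> \<xi>" "c 0 = p"
    and cl: "\<And>r \<epsilon>. r > 0 \<Longrightarrow> \<epsilon> > 0 \<Longrightarrow> \<exists>x\<in>(\<lambda>a. \<phi> a x0) ` centralizer G g. dist p x > r \<and> dist (geod_pt p x r) (c r) < \<epsilon>"
    unfolding in_cone_closure_def by blast
  obtain c0 where c0: "geodesic_ray c0" "\<xi> = ray_class c0" using vb_elem[OF vb] by blast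
  have cr: "geodesic_ray c" using c c0 unfolding ray_class_def by blast
  define f where "f = \<phi> g"
  have isof: "\<forall>x y. dist (f x) (f y) = dist x y" using act_iso[OF iso gc] by (simp add: f_def)
  define M where "M = max (dist p (f p)) (dist x0 (f x0))"
  have bd: "dist (c t) (f (c t)) \<le> M + 1" if t0: "t \<ge> 0" for t
  proof (cases "t = 0")
    case True then show ?thesis using c(2) by (simp add: M_def)
  next
    case False
    then have tp: "t > 0" using t0 by simp
    obtain x where xS: "x \<in> (\<lambda>a. \<phi> a x0) ` centralizer G g" and xd: "dist p x > t"
      and xc: "dist (geod_pt p x t) (c t) < 1/2" using cl[OF tp, of "1/2"] by auto
    obtain z where z: "z \<in> centralizer G g" "x = \<phi> z x0" using xS by blast
    have zc: "z \<in> carrier G" and zcomm: "g \<otimes>\<^bsub>G\<^esub> z = z \<otimes>\<^bsub>G\<^esub> g" using z unfolding centralizer_def by auto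
    have fx: "f x = \<phi> z (f x0)"
      using act_mult[OF iso gc zc, of x0] act_mult[OF iso zc gc, of x0] zcomm z(2) by (simp add: f_def)
    have dxf: "dist x (f x) = dist x0 (f x0)" using fx z(2) act_iso[OF iso zc] by simp
    define \<gamma> where "\<gamma> = (SOME \<gamma>. geodesic_seg \<gamma> p x)"
    have sg: "geodesic_seg \<gamma> p x" unfolding \<gamma>_def by (rule geod_pt_seg[OF cat])
    have gp: "geod_pt p x t = \<gamma> t" by (simp add: geod_pt_def \<gamma>_def)
    define L where "L = dist p x"
    have sg2: "geodesic_seg (f \<circ> \<gamma>) (f p) (f x)" by (rule iso_seg[OF isof sg])
    have tl: "t / L \<le> 1" using xd tp by (simp add: L_def divide_le_eq_1)
    have "dist (\<gamma> t) ((f \<circ> \<gamma>) t) \<le> (1 - t/L) * dist p (f p) + (t/L) * dist x (f x)"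
      by (rule convex_two[OF cat sg sg2]) (use isof xd tp in \<open>auto simp: L_def\<close>)
    also have "\<dots> \<le> (1 - t/L) * M + (t/L) * M"
      using xd tp dxf tl by (intro add_mono mult_left_mono) (auto simp: M_def L_def)
    also have "\<dots> = M" by (simp add: algebra_simps)
    finally have q: "dist (\<gamma> t) (f (\<gamma> t)) \<le> M" by simp
    have "dist (c t) (f (c t)) \<le> dist (c t) (\<gamma> t) + dist (\<gamma> t) (f (c t))" by (rule dist_triangle)
    also have "\<dots> \<le> dist (c t) (\<gamma> t) + (dist (\<gamma> t) (f (\<gamma> t)) + dist (f (\<gamma> t)) (f (c t)))"
      by (simp add: dist_triangle)
    also have "\<dots> \<le> M + 1" using q xc gp isof by (simp add: dist_commute)
    finally show ?thesis .
  qed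
  define c1 where "c1 = (SOME c. c \<in> \<xi>)"
  have c1: "c1 \<in> \<xi>" unfolding c1_def using c by (metis someI_ex)
  obtain B1 where B1: "\<And>t. t \<ge> 0 \<Longrightarrow> dist (c0 t) (c t) \<le> B1"
    using class_bound[OF self_in_class[OF c0(1)], of c] c c0(2) by blast
  obtain B2 where B2: "\<And>t. t \<ge> 0 \<Longrightarrow> dist (c t) (c1 t) \<le> B2"
    using class_bound[of c c0 c1] c c1 c0(2) by blast
  have "asymptotic c0 (f \<circ> c1)"
    unfolding asymptotic_def
  proof (intro exI[of _ "B1 + (M + 1) + B2"] allI impI)
    fix t :: real assume t0: "t \<ge> 0"
    have "dist (c0 t) ((f \<circ> c1) t) \<le> dist (c0 t) (c t) + dist (c t) (f (c1 t))"
      by (simp add: dist_triangle)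
    also have "\<dots> \<le> dist (c0 t) (c t) + (dist (c t) (f (c t)) + dist (f (c t)) (f (c1 t)))"
      by (simp add: dist_triangle)
    also have "\<dots> \<le> B1 + (M + 1) + B2" using B1[OF t0] B2[OF t0] bd[OF t0] isof by simp
    finally show "dist (c0 t) ((f \<circ> c1) t) \<le> B1 + (M + 1) + B2" .
  qed
  then have "ray_class c0 = ray_class (f \<circ> c1)" by (rule ray_class_eq)
  then have "bdry_act (\<phi> g) \<xi> = \<xi>" unfolding bdry_act_def c1_def f_def using c0(2) by simp
  then show "\<xi> \<in> fixed_bdry \<phi> g" unfolding fixed_bdry_def using vb by blast
qed

theorem corollary3:
  fixes G :: "('g, 'm) monoid_scheme"
    and \<phi> :: "'g \<Rightarrow> 'a::metric_space \<Rightarrow> 'a"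
    and g :: 'g
    and p x0 :: 'a
  assumes "group G"
    and "CAT0 TYPE('a)"
    and "proper_space TYPE('a)"
    and "geometric_action G \<phi>"
    and "g \<in> carrier G"
    and "\<forall>n::nat. n > 0 \<longrightarrow> g [^]\<^bsub>G\<^esub> n \<noteq> \<one>\<^bsub>G\<^esub>"
  shows "fixed_bdry \<phi> g = limit_set p \<phi> x0 (centralizer G g)
       \<and> limit_set p \<phi> x0 (centralizer G g) = bdry_of (Min_set (\<phi> g))"
proof -
  have iso: "isometric_action G \<phi>" using assms(4) unfolding geometric_action_def by simp
  obtain D where ne: "Min_set (\<phi> g) \<noteq> {}"
    and D: "\<forall>x\<in>Min_set (\<phi> g). \<exists>z\<in>centralizer G g. dist x (\<phi> z x0) \<le> D"
    using min_cocompact[OF assms(1,4,3,5), of x0] by blast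
  have 1: "fixed_bdry \<phi> g \<subseteq> bdry_of (Min_set (\<phi> g))" by (rule fixed_sub_min[OF assms(2) iso assms(5) ne])
  have 2: "bdry_of (Min_set (\<phi> g)) \<subseteq> limit_set p \<phi> x0 (centralizer G g)" by (rule min_sub_limit[OF assms(2) D])
  have 3: "limit_set p \<phi> x0 (centralizer G g) \<subseteq> fixed_bdry \<phi> g" by (rule limit_sub_fixed[OF assms(2,1) iso assms(5)])
  show ?thesis using 1 2 3 by blast
qed

end
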